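(* Let $X$ be a real Banach space and let $A \subset X$ be a balanced, bounded, convex, closed subset with nonempty interior. If there is a compact subset $K \subset X$ such that $B_X \subset A + K$, then for every $\lambda$ with $0<\lambda < 1/2$, $A$ contains a finite-codimensional ball of radius $\lambda$, i.e. there exist $x \in A$ and a finite-codimensional linear subspace $Y \subset X$ with $x + \lambda B_Y \subset A$.
   Context: $B_X$ is the closed unit ball of $X$ and $B_Y = B_X \cap Y$. $A$ is balanced if $tA \subset A$ for all $|t| \le 1$. $A + K$ is the Minkowski sum $\{a+c: a\in A, c\in K\}$. *)

theory Defs
  imports "HOL-Analysis.Analysis"
begin

definition balanced :: "'a::real_vector set \<Rightarrow> bool" where
  "balanced A \<longleftrightarrow> (\<forall>t::real. \<bar>t\<bar> \<le> 1 \<longrightarrow> (\<lambda>x. t *\<^sub>R x) ` A \<subseteq> A)"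

text \<open>A linear subspace Y has finite codimension if Y together with finitely many
  vectors spans the whole space (equivalently, X/Y is finite-dimensional).\<close>
definition finite_codim :: "'a::real_vector set \<Rightarrow> bool" where
  "finite_codim Y \<longleftrightarrow> subspace Y \<and> (\<exists>F. finite F \<and> span (Y \<union> F) = UNIV)"

end

theory Submission
  imports Defs
begin


definition goodg :: "('a::real_vector \<Rightarrow> real) \<Rightarrow> 'a \<Rightarrow> ('a \<times> real) set \<Rightarrow> bool" where
  "goodg p x0 G \<longleftrightarrow> (0,0) \<in> G \<and> (\<forall>x a y b. (x,a) \<in> G \<longrightarrow> (y,b) \<in> G \<longrightarrow> (x+y, a+b) \<in> G)
     \<and> (\<forall>c x a. (x,a) \<in> G \<longrightarrow> (c *\<^sub>R x, c * a) \<in> G)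
     \<and> (\<forall>x a b. (x,a) \<in> G \<longrightarrow> (x,b) \<in> G \<longrightarrow> a = b)
     \<and> (\<forall>x a. (x,a) \<in> G \<longrightarrow> a \<le> p x) \<and> (x0, p x0) \<in> G"

lemma goodgD:
  assumes "goodg p x0 G"
  shows "(0,0) \<in> G" "\<And>x a y b. (x,a) \<in> G \<Longrightarrow> (y,b) \<in> G \<Longrightarrow> (x+y, a+b) \<in> G"
    "\<And>c x a. (x,a) \<in> G \<Longrightarrow> (c *\<^sub>R x, c * a) \<in> G"
    "\<And>x a b. (x,a) \<in> G \<Longrightarrow> (x,b) \<in> G \<Longrightarrow> a = b"
    "\<And>x a. (x,a) \<in> G \<Longrightarrow> a \<le> p x" "(x0, p x0) \<in> G"
  using assms by (simp_all add: goodg_def)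

lemma hahn_banach:
  fixes p :: "'a::real_vector \<Rightarrow> real"
  assumes sub: "\<And>x y. p (x + y) \<le> p x + p y"
    and hom: "\<And>t x. 0 < t \<Longrightarrow> p (t *\<^sub>R x) = t * p x"
  shows "\<exists>g. linear g \<and> (\<forall>x. g x \<le> p x) \<and> g x0 = p x0"
proof -
  have p0: "p 0 = 0" using hom[of 2 0] by simp
  have pneg: "- p x \<le> p (- x)" for x using sub[of x "-x"] p0 by simp
  define G0 where "G0 = {(t *\<^sub>R x0, t * p x0) | t. True}"
  have G0: "goodg p x0 G0"
    unfolding goodg_def G0_def
  proof (intro conjI allI impI)
    show "(0::'a, 0::real) \<in> {(t *\<^sub>R x0, t * p x0) |t. True}" by (rule CollectI, rule exI[of _ 0]) simp
    show "(x0, p x0) \<in> {(t *\<^sub>R x0, t * p x0) |t. True}" by (rule CollectI, rule exI[of _ 1]) simp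
    fix x a y b
    assume "(x, a) \<in> {(t *\<^sub>R x0, t * p x0) |t. True}" "(y, b) \<in> {(t *\<^sub>R x0, t * p x0) |t. True}"
    then obtain s t where "x = s *\<^sub>R x0" "a = s * p x0" "y = t *\<^sub>R x0" "b = t * p x0" by blast
    then show "(x + y, a + b) \<in> {(t *\<^sub>R x0, t * p x0) |t. True}"
      by (intro CollectI exI[of _ "s+t"]) (simp add: scaleR_add_left distrib_right)
  next
    fix c x a
    assume "(x, a) \<in> {(t *\<^sub>R x0, t * p x0) |t. True}"
    then obtain s where "x = s *\<^sub>R x0" "a = s * p x0" by auto
    then show "(c *\<^sub>R x, c * a) \<in> {(t *\<^sub>R x0, t * p x0) |t. True}"
      by (intro CollectI exI[of _ "c * s"]) simp
  next
    fix x a b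
    assume h1: "(x, a) \<in> {(t *\<^sub>R x0, t * p x0) |t. True}" and h2: "(x, b) \<in> {(t *\<^sub>R x0, t * p x0) |t. True}"
    from h1 obtain s where s1: "x = s *\<^sub>R x0" "a = s * p x0" by blast
    from h2 obtain t where t1: "x = t *\<^sub>R x0" "b = t * p x0" by blast
    note st = s1 t1
    show "a = b"
    proof (cases "x0 = 0")
      case True then show ?thesis using st p0 by simp
    next
      case False
      have "s = t" using st False by (metis scaleR_cancel_right)
      then show ?thesis using st by simp
    qed
  next
    fix x a
    assume "(x, a) \<in> {(t *\<^sub>R x0, t * p x0) |t. True}"
    then obtain t where t: "x = t *\<^sub>R x0" "a = t * p x0" by auto
    show "a \<le> p x"
    proof (cases "0 < t")
      case True then show ?thesis using t hom by simp
    next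
      case False
      show ?thesis
      proof (cases "t = 0")
        case True then show ?thesis using t p0 by simp
      next
        case False
        with \<open>\<not> 0 < t\<close> have "0 < -t" by simp
        have "p x = p ((-t) *\<^sub>R (- x0))" using t by simp
        also have "\<dots> = (-t) * p (- x0)" using hom[OF \<open>0 < -t\<close>] by blast
        finally have "p x = (-t) * p (-x0)" .
        moreover have "(-t) * (- p x0) \<le> (-t) * p (-x0)"
          using pneg[of x0] \<open>0 < -t\<close> by (intro mult_left_mono) auto
        ultimately show ?thesis using t by simp
      qed
    qed
  qed
  have "\<exists>M\<in>{G. goodg p x0 G}. \<forall>X\<in>{G. goodg p x0 G}. M \<subseteq> X \<longrightarrow> X = M"
  proof (rule Zorn_Lemma2, intro ballI)
    fix C assume C: "C \<in> chains {G. goodg p x0 G}"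
    show "\<exists>U\<in>{G. goodg p x0 G}. \<forall>X\<in>C. X \<subseteq> U"
    proof (cases "C = {}")
      case True then show ?thesis using G0 by auto
    next
      case False
      have Cg: "\<And>G. G \<in> C \<Longrightarrow> goodg p x0 G" using C by (auto simp: chains_def)
      have Cch: "\<And>G H. G \<in> C \<Longrightarrow> H \<in> C \<Longrightarrow> G \<subseteq> H \<or> H \<subseteq> G"
        using C by (auto simp: chains_def chain_subset_def)
      have "goodg p x0 (\<Union>C)"
        unfolding goodg_def
      proof (intro conjI allI impI)
        obtain G where "G \<in> C" using False by auto
        then show "(0, 0) \<in> \<Union> C" "(x0, p x0) \<in> \<Union> C" using goodgD(1,6)[OF Cg] by auto
      next
        fix x a y b assume "(x, a) \<in> \<Union> C" "(y, b) \<in> \<Union> C"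
        then obtain G H where GH: "G \<in> C" "H \<in> C" "(x,a) \<in> G" "(y,b) \<in> H" by auto
        from Cch[OF GH(1,2)] show "(x + y, a + b) \<in> \<Union> C"
        proof
          assume "G \<subseteq> H" then show ?thesis using GH goodgD[OF Cg[OF GH(2)]] by blast
        next
          assume "H \<subseteq> G" then show ?thesis using GH goodgD[OF Cg[OF GH(1)]] by blast
        qed
      next
        fix c x a assume "(x, a) \<in> \<Union> C"
        then obtain G where "G \<in> C" "(x,a) \<in> G" by auto
        then show "(c *\<^sub>R x, c * a) \<in> \<Union> C" using goodgD(3)[OF Cg] by blast
      next
        fix x a b assume "(x, a) \<in> \<Union> C" "(x, b) \<in> \<Union> C"
        then obtain G H where GH: "G \<in> C" "H \<in> C" "(x,a) \<in> G" "(x,b) \<in> H" by auto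
        from Cch[OF GH(1,2)] show "a = b"
        proof
          assume "G \<subseteq> H" then show ?thesis using GH goodgD[OF Cg[OF GH(2)]] by blast
        next
          assume "H \<subseteq> G" then show ?thesis using GH goodgD[OF Cg[OF GH(1)]] by blast
        qed
      next
        fix x a assume "(x, a) \<in> \<Union> C"
        then obtain G where "G \<in> C" "(x,a) \<in> G" by auto
        then show "a \<le> p x" using goodgD(5)[OF Cg] by blast
      qed
      then show ?thesis by blast
    qed
  qed
  then obtain M where Mg: "goodg p x0 M" and Mmax: "\<And>X. goodg p x0 X \<Longrightarrow> M \<subseteq> X \<Longrightarrow> X = M"
    by auto
  have M0: "(0,0) \<in> M" and Madd: "\<And>x a y b. (x,a) \<in> M \<Longrightarrow> (y,b) \<in> M \<Longrightarrow> (x+y, a+b) \<in> M"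
    and Msc: "\<And>c x a. (x,a) \<in> M \<Longrightarrow> (c *\<^sub>R x, c * a) \<in> M"
    and Mfun: "\<And>x a b. (x,a) \<in> M \<Longrightarrow> (x,b) \<in> M \<Longrightarrow> a = b"
    and Mdom: "\<And>x a. (x,a) \<in> M \<Longrightarrow> a \<le> p x" and Mx0: "(x0, p x0) \<in> M"
    using goodgD[OF Mg] by blast+
  have total: "\<exists>a. (y,a) \<in> M" for y
  proof (rule ccontr)
    assume ny: "\<nexists>a. (y, a) \<in> M"
    define L where "L = {a' - p (x' - y) | x' a'. (x',a') \<in> M}"
    define c where "c = Sup L"
    have Lne: "L \<noteq> {}" using M0 unfolding L_def by blast
    have Lub: "l \<le> p (x + y) - a" if "l \<in> L" "(x,a) \<in> M" for l x a
    proof -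
      obtain x' a' where l: "l = a' - p (x' - y)" "(x',a') \<in> M" using \<open>l \<in> L\<close> unfolding L_def by blast
      have "a' + a \<le> p (x' + x)" using Mdom[OF Madd[OF l(2) that(2)]] .
      also have "\<dots> = p ((x' - y) + (x + y))" by (simp add: algebra_simps)
      also have "\<dots> \<le> p (x' - y) + p (x + y)" by (rule sub)
      finally show ?thesis using l by simp
    qed
    have c_up: "c \<le> p (x + y) - a" if "(x,a) \<in> M" for x a
      unfolding c_def using Lne Lub that by (intro cSup_least) auto
    have bdd: "bdd_above L" using Lub M0 by (auto intro!: bdd_aboveI)
    have c_lo: "a - p (x - y) \<le> c" if "(x,a) \<in> M" for x a
      unfolding c_def using that bdd by (intro cSup_upper) (auto simp: L_def)
    define M' where "M' = {(x + t *\<^sub>R y, a + t * c) | x a t. (x,a) \<in> M}"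
    have "goodg p x0 M'"
      unfolding goodg_def
    proof (intro conjI allI impI)
      show "(0, 0) \<in> M'" unfolding M'_def using M0 by force
      show "(x0, p x0) \<in> M'" unfolding M'_def using Mx0 by force
    next
      fix x a z b assume "(x, a) \<in> M'" "(z, b) \<in> M'"
      then obtain x1 a1 t1 x2 a2 t2 where h: "(x1,a1) \<in> M" "(x2,a2) \<in> M"
        "x = x1 + t1 *\<^sub>R y" "a = a1 + t1 * c" "z = x2 + t2 *\<^sub>R y" "b = a2 + t2 * c"
        unfolding M'_def by blast
      show "(x + z, a + b) \<in> M'" unfolding M'_def
        by (rule CollectI, rule exI[of _ "x1+x2"], rule exI[of _ "a1+a2"], rule exI[of _ "t1+t2"])
          (use h Madd[OF h(1,2)] in \<open>simp add: algebra_simps\<close>)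
    next
      fix d x a assume "(x, a) \<in> M'"
      then obtain x1 a1 t1 where h: "(x1,a1) \<in> M" "x = x1 + t1 *\<^sub>R y" "a = a1 + t1 * c"
        unfolding M'_def by blast
      show "(d *\<^sub>R x, d * a) \<in> M'" unfolding M'_def
        by (rule CollectI, rule exI[of _ "d *\<^sub>R x1"], rule exI[of _ "d * a1"], rule exI[of _ "d * t1"])
          (use h Msc[OF h(1), of d] in \<open>simp add: algebra_simps\<close>)
    next
      fix x a b assume "(x, a) \<in> M'" "(x, b) \<in> M'"
      then obtain x1 a1 t1 x2 a2 t2 where h: "(x1,a1) \<in> M" "(x2,a2) \<in> M"
        "x = x1 + t1 *\<^sub>R y" "a = a1 + t1 * c" "x = x2 + t2 *\<^sub>R y" "b = a2 + t2 * c"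
        unfolding M'_def by blast
      have d: "(x1 - x2, a1 - a2) \<in> M" using Madd[OF h(1) Msc[OF h(2), of "-1"]] by simp
      have "t1 = t2"
      proof (rule ccontr)
        assume "t1 \<noteq> t2"
        have "x1 - x2 = (t2 - t1) *\<^sub>R y" using h(3,5) by (simp add: algebra_simps)
        then have "(1/(t2-t1)) *\<^sub>R (x1 - x2) = y" using \<open>t1 \<noteq> t2\<close> by simp
        then show False using Msc[OF d, of "1/(t2-t1)"] ny by metis
      qed
      then have "x1 = x2" using h by simp
      then have "a1 = a2" using Mfun h by blast
      then show "a = b" using h \<open>t1 = t2\<close> by simp
    next
      fix x a assume "(x, a) \<in> M'"
      then obtain x1 a1 t where h: "(x1,a1) \<in> M" "x = x1 + t *\<^sub>R y" "a = a1 + t * c"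
        unfolding M'_def by blast
      show "a \<le> p x"
      proof (cases "0 < t")
        case True
        have "c \<le> p ((1/t) *\<^sub>R x1 + y) - (1/t) * a1" using c_up[OF Msc[OF h(1)]] .
        then have "t * c \<le> t * (p ((1/t) *\<^sub>R x1 + y) - (1/t) * a1)" using True by simp
        also have "\<dots> = p (t *\<^sub>R ((1/t) *\<^sub>R x1 + y)) - a1" using hom[OF True] True
          by (simp add: right_diff_distrib)
        also have "t *\<^sub>R ((1/t) *\<^sub>R x1 + y) = x" using h True by (simp add: scaleR_add_right)
        finally show ?thesis using h by simp
      next
        case False
        show ?thesis
        proof (cases "t = 0")
          case True then show ?thesis using h Mdom by simp
        next
          case False
          with \<open>\<not> 0 < t\<close> have s: "0 < -t" by simp
          have "(1/(-t)) * a1 - p ((1/(-t)) *\<^sub>R x1 - y) \<le> c" using c_lo[OF Msc[OF h(1)]] .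
          then have "(-t) * ((1/(-t)) * a1 - p ((1/(-t)) *\<^sub>R x1 - y)) \<le> (-t) * c"
            using s by (intro mult_left_mono) auto
          moreover have "(-t) * ((1/(-t)) * a1 - p ((1/(-t)) *\<^sub>R x1 - y)) = a1 - p ((-t) *\<^sub>R ((1/(-t)) *\<^sub>R x1 - y))"
            using hom[OF s] s by (simp add: right_diff_distrib)
          moreover have "(-t) *\<^sub>R ((1/(-t)) *\<^sub>R x1 - y) = x" using h s by (simp add: algebra_simps)
          ultimately show ?thesis using h by simp
        qed
      qed
    qed
    moreover have "M \<subseteq> M'" unfolding M'_def by force
    ultimately have "M' = M" using Mmax by blast
    moreover have "(y, c) \<in> M'" unfolding M'_def using M0 by force
    ultimately show False using ny by blast
  qed
  define g where "g y = (THE a. (y,a) \<in> M)" for y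
  have gM: "(y, g y) \<in> M" for y
    unfolding g_def using total[of y] Mfun by (metis theI)
  have geq: "(y,a) \<in> M \<Longrightarrow> g y = a" for y a using gM Mfun by blast
  have "linear g"
    by (rule linearI) (auto intro!: geq Madd Msc gM)
  moreover have "\<forall>x. g x \<le> p x" using gM Mdom by blast
  moreover have "g x0 = p x0" using geq[OF Mx0] .
  ultimately show ?thesis by blast
qed



definition mk :: "'a::real_normed_vector set \<Rightarrow> 'a \<Rightarrow> real" where
  "mk A x = Inf {s. 0 < s \<and> (\<exists>a\<in>A. x = s *\<^sub>R a)}"

lemma mk_in:
  fixes A :: "'a::real_normed_vector set"
  assumes "0 < \<rho>" "ball 0 \<rho> \<subseteq> A" "norm x / \<rho> < s"
  shows "0 < s \<and> (\<exists>a\<in>A. x = s *\<^sub>R a)"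
proof -
  have s: "0 < s" using assms(1,3) by (smt (verit) divide_nonneg_pos norm_ge_zero)
  have "norm x < s * \<rho>" using assms(1,3) by (simp add: divide_less_eq mult.commute)
  then have "norm ((1/s) *\<^sub>R x) < \<rho>" using s by (simp add: divide_less_eq mult.commute)
  then have "(1/s) *\<^sub>R x \<in> A" using assms(2) by (auto simp: dist_norm)
  moreover have "x = s *\<^sub>R ((1/s) *\<^sub>R x)" using s by simp
  ultimately show ?thesis using s by blast
qed

lemma mk_ne:
  fixes A :: "'a::real_normed_vector set"
  assumes "0 < \<rho>" "ball 0 \<rho> \<subseteq> A"
  shows "{s. 0 < s \<and> (\<exists>a\<in>A. x = s *\<^sub>R a)} \<noteq> {}"
  using mk_in[OF assms, of x "norm x / \<rho> + 1"] by auto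

lemma mk_le:
  fixes A :: "'a::real_normed_vector set"
  assumes "0 < s" "a \<in> A" "x = s *\<^sub>R a"
  shows "mk A x \<le> s"
  unfolding mk_def using assms
  by (intro cInf_lower) (auto intro!: bdd_belowI[of _ 0])

lemma mk_lt:
  fixes A :: "'a::real_normed_vector set"
  assumes "0 < \<rho>" "ball 0 \<rho> \<subseteq> A" "mk A x < t"
  shows "\<exists>s. 0 < s \<and> s < t \<and> (\<exists>a\<in>A. x = s *\<^sub>R a)"
  using assms(3) mk_ne[OF assms(1,2), of x] unfolding mk_def
  by (subst (asm) cInf_less_iff) (auto intro!: bdd_belowI[of _ 0])

lemma mk_norm:
  fixes A :: "'a::real_normed_vector set"
  assumes "0 < \<rho>" "ball 0 \<rho> \<subseteq> A"
  shows "mk A x \<le> norm x / \<rho>"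
proof (rule dense_ge)
  fix z assume "norm x / \<rho> < z"
  from mk_in[OF assms this] show "mk A x \<le> z" using mk_le by blast
qed

lemma mk_one:
  fixes A :: "'a::real_normed_vector set"
  assumes "a \<in> A" shows "mk A a \<le> 1"
  using mk_le[of 1 a A a] assms by simp

lemma mk_add:
  fixes A :: "'a::real_normed_vector set"
  assumes "convex A" "0 < \<rho>" "ball 0 \<rho> \<subseteq> A"
  shows "mk A (x + y) \<le> mk A x + mk A y"
proof (rule dense_ge)
  fix z assume z: "mk A x + mk A y < z"
  define e where "e = (z - mk A x - mk A y) / 2"
  have e: "0 < e" using z unfolding e_def by simp
  obtain s a where s: "0 < s" "s < mk A x + e" "a \<in> A" "x = s *\<^sub>R a"
    using mk_lt[OF assms(2,3), of x "mk A x + e"] e by auto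
  obtain t b where t: "0 < t" "t < mk A y + e" "b \<in> A" "y = t *\<^sub>R b"
    using mk_lt[OF assms(2,3), of y "mk A y + e"] e by auto
  have st: "0 < s + t" using s t by simp
  have "(s/(s+t)) *\<^sub>R a + (t/(s+t)) *\<^sub>R b \<in> A"
    using s t st by (intro convexD[OF assms(1)]) (auto simp: add_divide_distrib[symmetric])
  moreover have "x + y = (s+t) *\<^sub>R ((s/(s+t)) *\<^sub>R a + (t/(s+t)) *\<^sub>R b)"
    using s t st by (simp add: scaleR_add_right)
  ultimately have "mk A (x + y) \<le> s + t" using mk_le[OF st] by blast
  also have "\<dots> < z" using s(2) t(2) unfolding e_def by (simp add: field_simps)
  finally show "mk A (x + y) \<le> z" by simp
qed

lemma mk_scale_le:
  fixes A :: "'a::real_normed_vector set"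
  assumes "0 < \<rho>" "ball 0 \<rho> \<subseteq> A" "0 < c"
  shows "mk A (c *\<^sub>R x) \<le> c * mk A x"
proof (rule dense_ge)
  fix z assume z: "c * mk A x < z"
  then have "mk A x < z / c" using assms(3) by (simp add: less_divide_eq mult.commute)
  then obtain s a where s: "0 < s" "s < z / c" "a \<in> A" "x = s *\<^sub>R a"
    using mk_lt[OF assms(1,2)] by blast
  have "mk A (c *\<^sub>R x) \<le> c * s" using s assms(3) by (intro mk_le[of _ a]) auto
  also have "\<dots> < z" using s assms(3) by (simp add: less_divide_eq mult.commute)
  finally show "mk A (c *\<^sub>R x) \<le> z" by simp
qed

lemma mk_hom:
  fixes A :: "'a::real_normed_vector set"
  assumes "0 < \<rho>" "ball 0 \<rho> \<subseteq> A" "0 < c"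
  shows "mk A (c *\<^sub>R x) = c * mk A x"
proof -
  have "mk A x = mk A ((1/c) *\<^sub>R (c *\<^sub>R x))" using assms(3) by simp
  also have "\<dots> \<le> (1/c) * mk A (c *\<^sub>R x)" using assms by (intro mk_scale_le) auto
  finally have "c * mk A x \<le> mk A (c *\<^sub>R x)" using assms(3) by (simp add: field_simps)
  then show ?thesis using mk_scale_le[OF assms, of x] by linarith
qed

lemma mk_small:
  fixes A :: "'a::real_normed_vector set"
  assumes "balanced A" "0 < \<rho>" "ball 0 \<rho> \<subseteq> A" "mk A k < \<kappa>"
  shows "\<exists>a\<in>A. k = \<kappa> *\<^sub>R a"
proof -
  obtain s a where s: "0 < s" "s < \<kappa>" "a \<in> A" "k = s *\<^sub>R a"
    using mk_lt[OF assms(2,3,4)] by blast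
  have "\<bar>s/\<kappa>\<bar> \<le> 1" using s by simp
  then have "(s/\<kappa>) *\<^sub>R a \<in> A" using assms(1) s(3) unfolding balanced_def by blast
  moreover have "k = \<kappa> *\<^sub>R ((s/\<kappa>) *\<^sub>R a)" using s by simp
  ultimately show ?thesis by blast
qed

lemma mk_open:
  fixes A :: "'a::real_normed_vector set"
  assumes "convex A" "0 < \<rho>" "ball 0 \<rho> \<subseteq> A"
  shows "open {x. mk A x < \<kappa>}"
  unfolding open_contains_ball
proof (intro ballI)
  fix x assume "x \<in> {x. mk A x < \<kappa>}"
  then have x: "mk A x < \<kappa>" by simp
  show "\<exists>e>0. ball x e \<subseteq> {x. mk A x < \<kappa>}"
  proof (intro exI conjI subsetI)
    show "0 < \<rho> * (\<kappa> - mk A x)" using x assms(2) by simp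
    fix z assume "z \<in> ball x (\<rho> * (\<kappa> - mk A x))"
    then have d: "norm (z - x) < \<rho> * (\<kappa> - mk A x)" by (simp add: dist_norm norm_minus_commute)
    have "mk A z = mk A (x + (z - x))" by simp
    also have "\<dots> \<le> mk A x + mk A (z - x)" by (rule mk_add[OF assms])
    also have "\<dots> \<le> mk A x + norm (z - x) / \<rho>" using mk_norm[OF assms(2,3)] by simp
    also have "norm (z - x) / \<rho> < \<kappa> - mk A x" using d assms(2) by (simp add: pos_divide_less_eq mult.commute)
    then have "mk A x + norm (z - x) / \<rho> < \<kappa>" by linarith
    finally show "z \<in> {x. mk A x < \<kappa>}" by simp
  qed
qed

lemma ker_subspace:
  assumes "\<And>k. k \<in> T \<Longrightarrow> linear (G k)"
  shows "subspace {z. \<forall>k\<in>T. G k z = (0::real)}"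
  unfolding subspace_def using assms by (auto simp: linear_0 linear_add linear_scale)

lemma ker_codim:
  assumes "finite T" "\<And>k. k \<in> T \<Longrightarrow> linear (G k)"
  shows "\<exists>F. finite F \<and> span ({z. \<forall>k\<in>T. G k z = (0::real)} \<union> F) = UNIV"
  using assms
proof (induction T rule: finite_induct)
  case empty
  then show ?case by (intro exI[of _ "{}"]) simp
next
  case (insert h T)
  define W where "W = {z. \<forall>k\<in>T. G k z = (0::real)}"
  obtain F where F: "finite F" "span (W \<union> F) = UNIV" using insert unfolding W_def by auto
  have Wsub: "subspace W" unfolding W_def using insert.prems by (intro ker_subspace) auto
  have lh: "linear (G h)" using insert.prems by auto
  have eq: "{z. \<forall>k\<in>insert h T. G k z = 0} = {z\<in>W. G h z = 0}" unfolding W_def by auto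
  show ?case
  proof (cases "\<exists>w0\<in>W. G h w0 \<noteq> 0")
    case False
    then have "{z\<in>W. G h z = 0} = W" by auto
    then show ?thesis using F eq by auto
  next
    case True
    then obtain w0 where w0: "w0 \<in> W" "G h w0 \<noteq> 0" by blast
    have "W \<union> F \<subseteq> span ({z\<in>W. G h z = 0} \<union> insert w0 F)"
    proof
      fix w assume "w \<in> W \<union> F"
      then show "w \<in> span ({z\<in>W. G h z = 0} \<union> insert w0 F)"
      proof
        assume wW: "w \<in> W"
        define c where "c = G h w / G h w0"
        have "w - c *\<^sub>R w0 \<in> W" using wW w0 Wsub by (simp add: subspace_diff subspace_scale)
        moreover have "G h (w - c *\<^sub>R w0) = 0" using w0 lh unfolding c_def
          by (simp add: linear_diff linear_scale)
        ultimately have "w - c *\<^sub>R w0 \<in> span ({z\<in>W. G h z = 0} \<union> insert w0 F)"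
          by (intro span_base) auto
        moreover have "c *\<^sub>R w0 \<in> span ({z\<in>W. G h z = 0} \<union> insert w0 F)"
          by (intro span_scale span_base) auto
        ultimately have "(w - c *\<^sub>R w0) + c *\<^sub>R w0 \<in> span ({z\<in>W. G h z = 0} \<union> insert w0 F)"
          by (rule span_add)
        then show ?thesis by simp
      next
        assume "w \<in> F" then show ?thesis by (intro span_base) auto
      qed
    qed
    then have "span (W \<union> F) \<subseteq> span ({z\<in>W. G h z = 0} \<union> insert w0 F)"
      by (metis span_mono span_span)
    then show ?thesis using F eq by (intro exI[of _ "insert w0 F"]) auto
  qed
qed


theorem corollary4p4:
  fixes A :: "'a::banach set"
  assumes "balanced A" and "bounded A" and "convex A" and "closed A"
    and "interior A \<noteq> {}"
    and "compact K"
    and "cball 0 1 \<subseteq> {a + c | a c. a \<in> A \<and> c \<in> K}"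
  shows "\<forall>r::real. 0 < r \<and> r < 1/2 \<longrightarrow>
           (\<exists>x\<in>A. \<exists>Y. finite_codim Y \<and>
              (\<lambda>y. x + r *\<^sub>R y) ` (cball 0 1 \<inter> Y) \<subseteq> A)"
proof (intro allI impI)
  fix r :: real assume r: "0 < r \<and> r < 1/2"
  note bal = assms(1) and cvx = assms(3)
  have negA: "- a \<in> A" if "a \<in> A" for a
  proof -
    have "(\<lambda>x. (-1::real) *\<^sub>R x) ` A \<subseteq> A" using bal unfolding balanced_def by (drule_tac spec[of _ "-1"]) simp
    then show ?thesis using that by force
  qed
  obtain x0 where "x0 \<in> interior A" using assms(5) by blast
  then obtain \<rho> where \<rho>: "0 < \<rho>" "ball x0 \<rho> \<subseteq> A" using mem_interior by blast
  have ball0: "ball 0 \<rho> \<subseteq> A"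
  proof
    fix z :: 'a assume z: "z \<in> ball 0 \<rho>"
    have "x0 + z \<in> A" using z \<rho>(2) by (auto simp: dist_norm)
    moreover have "x0 - z \<in> A" using z \<rho>(2) by (auto simp: dist_norm)
    then have "z - x0 \<in> A" using negA by force
    ultimately have "(1/2::real) *\<^sub>R (x0 + z) + (1/2::real) *\<^sub>R (z - x0) \<in> A"
      by (intro convexD[OF cvx]) auto
    moreover have "(1/2::real) *\<^sub>R (x0 + z) + (1/2::real) *\<^sub>R (z - x0) = z"
      by (simp add: algebra_simps flip: scaleR_add_left)
    ultimately show "z \<in> A" by simp
  qed
  have zA: "0 \<in> A" using ball0 \<rho>(1) by auto
  define p where "p = mk A"
  define \<kappa> where "\<kappa> = 1/r - 1"
  have \<kappa>: "1 < \<kappa>" using r unfolding \<kappa>_def by (simp add: field_simps)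
  have r\<kappa>: "r * \<kappa> = 1 - r" using r unfolding \<kappa>_def by (simp add: field_simps)
  have "\<forall>k. \<exists>g. linear g \<and> (\<forall>x. g x \<le> p x) \<and> g k = p k"
  proof
    fix k
    show "\<exists>g. linear g \<and> (\<forall>x. g x \<le> p x) \<and> g k = p k"
      unfolding p_def
      by (rule hahn_banach) (auto intro: mk_add[OF cvx \<rho>(1) ball0] mk_hom[OF \<rho>(1) ball0])
  qed
  then obtain G where G: "\<And>k. linear (G k)" "\<And>k x. G k x \<le> p x" "\<And>k. G k k = p k"
    by metis
  define S where "S = K - {x. p x < \<kappa>}"
  have cS: "compact S" unfolding S_def p_def
    by (intro compact_diff assms(6) mk_open[OF cvx \<rho>(1) ball0])
  have "S \<subseteq> (\<Union>k\<in>S. ball k ((\<kappa> - 1) * \<rho>))" using \<kappa> \<rho>(1) by force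
  then obtain T where T: "T \<subseteq> S" "finite T" "S \<subseteq> (\<Union>k\<in>T. ball k ((\<kappa> - 1) * \<rho>))"
    using compactE_image[OF cS, of S "\<lambda>k. ball k ((\<kappa> - 1) * \<rho>)"] by blast
  define Y where "Y = {z. \<forall>k\<in>T. G k z = 0}"
  have fc: "finite_codim Y"
  proof -
    have "subspace {z. \<forall>k\<in>T. G k z = 0}" by (rule ker_subspace) (rule G(1))
    moreover have "\<exists>F. finite F \<and> span ({z. \<forall>k\<in>T. G k z = 0} \<union> F) = UNIV"
      by (rule ker_codim[OF T(2)]) (rule G(1))
    ultimately show ?thesis unfolding finite_codim_def Y_def by (rule conjI)
  qed
  have "(\<lambda>y. 0 + r *\<^sub>R y) ` (cball 0 1 \<inter> Y) \<subseteq> A"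
  proof
    fix w assume "w \<in> (\<lambda>y. 0 + r *\<^sub>R y) ` (cball 0 1 \<inter> Y)"
    then obtain y where y: "y \<in> cball 0 1" "y \<in> Y" "w = r *\<^sub>R y" by auto
    obtain a c where ac: "y = a + c" "a \<in> A" "c \<in> K" using y(1) assms(7) by blast
    show "w \<in> A"
    proof (cases "p c < \<kappa>")
      case True
      then obtain a' where a': "a' \<in> A" "c = \<kappa> *\<^sub>R a'"
        using mk_small[OF bal \<rho>(1) ball0] unfolding p_def by blast
      have "w = r *\<^sub>R a + (1 - r) *\<^sub>R a'" using y(3) ac(1) a'(2) r\<kappa>
        by (simp add: scaleR_add_right)
      also have "\<dots> \<in> A" using r ac(2) a'(1) by (intro convexD[OF cvx]) auto
      finally show ?thesis .
    next
      case False
      then have "c \<in> S" using ac(3) unfolding S_def by auto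
      then obtain k where k: "k \<in> T" "c \<in> ball k ((\<kappa> - 1) * \<rho>)" using T(3) by blast
      have pk: "\<kappa> \<le> p k" using k(1) T(1) unfolding S_def by auto
      have "norm (k - c) < (\<kappa> - 1) * \<rho>" using k(2) by (simp add: dist_norm)
      then have "p (k - c) < \<kappa> - 1"
        using mk_norm[OF \<rho>(1) ball0, of "k - c"] \<rho>(1) unfolding p_def
        by (smt (verit) divide_less_eq)
      moreover have "G k (k - c) \<le> p (k - c)" by (rule G(2))
      moreover have "G k (k - c) = G k k - G k c" using G(1) by (simp add: linear_diff)
      ultimately have Gc: "1 < G k c" using pk G(3)[of k] by linarith
      have "G k y = 0" using y(2) k(1) unfolding Y_def by blast
      moreover have "- a = c - y" using ac(1) by simp
      ultimately have "G k (- a) = G k c" using linear_diff[OF G(1)[of k], of c y] by simp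
      moreover have "G k (- a) \<le> 1" using G(2)[of k "-a"] mk_one[OF negA[OF ac(2)]] unfolding p_def
        by linarith
      ultimately show ?thesis using Gc by linarith
    qed
  qed
  then show "\<exists>x\<in>A. \<exists>Y. finite_codim Y \<and> (\<lambda>y. x + r *\<^sub>R y) ` (cball 0 1 \<inter> Y) \<subseteq> A"
    using zA fc by blast
qed

end
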